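(* Let $m,n$ be positive integers. The poset $\mathbf{P}_{m,n}$ is a ranked poset in which the rank of $(i,j,k)$ equals $m+n-2-i-j+2k$. It has a unique minimal element $(m-1,n-1,0)$, which has rank $0$. The maximal elements are of the form $(i,i,i)$ and have rank $m+n-2$.
   Context: The poset $\mathbf{P}_{m,n}$ has elements the integer triples $(i,j,k)$ with $0\le k\le m-1$, $k\le j\le n-1$, $k\le i\le m-1$, and partial order generated by the covering relations: $(i,j,k)$ covers each of $(i+1,j,k)$, $(i,j+1,k)$, $(i-1,j,k-1)$, $(i,j-1,k-1)$ that is an element of $\mathbf{P}_{m,n}$. *)

theory Defs
  imports Main
begin

type_synonym triple = "int \<times> int \<times> int"

definition Pelems :: "nat \<Rightarrow> nat \<Rightarrow> triple set" where
  "Pelems m n = {(i,j,k). 0 \<le> k \<and> k \<le> int m - 1 \<and> k \<le> j \<and> j \<le> int n - 1 \<and> k \<le> i \<and> i \<le> int m - 1}"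

definition gen :: "nat \<Rightarrow> nat \<Rightarrow> triple \<Rightarrow> triple \<Rightarrow> bool" where
  "gen m n x y \<longleftrightarrow> x \<in> Pelems m n \<and> y \<in> Pelems m n \<and>
     (case y of (i,j,k) \<Rightarrow>
        x = (i+1,j,k) \<or> x = (i,j+1,k) \<or> x = (i-1,j,k-1) \<or> x = (i,j-1,k-1))"

definition Ple :: "nat \<Rightarrow> nat \<Rightarrow> triple \<Rightarrow> triple \<Rightarrow> bool" where
  "Ple m n x y \<longleftrightarrow> x \<in> Pelems m n \<and> y \<in> Pelems m n \<and> (gen m n)\<^sup>*\<^sup>* x y"

definition Pless :: "nat \<Rightarrow> nat \<Rightarrow> triple \<Rightarrow> triple \<Rightarrow> bool" where
  "Pless m n x y \<longleftrightarrow> Ple m n x y \<and> x \<noteq> y"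

definition Pcovers :: "nat \<Rightarrow> nat \<Rightarrow> triple \<Rightarrow> triple \<Rightarrow> bool" where
  "Pcovers m n x y \<longleftrightarrow> Pless m n x y \<and> \<not> (\<exists>z. Pless m n x z \<and> Pless m n z y)"

definition Pminimal :: "nat \<Rightarrow> nat \<Rightarrow> triple \<Rightarrow> bool" where
  "Pminimal m n x \<longleftrightarrow> x \<in> Pelems m n \<and> \<not> (\<exists>y. Pless m n y x)"

definition Pmaximal :: "nat \<Rightarrow> nat \<Rightarrow> triple \<Rightarrow> bool" where
  "Pmaximal m n x \<longleftrightarrow> x \<in> Pelems m n \<and> \<not> (\<exists>y. Pless m n x y)"

definition Prank :: "nat \<Rightarrow> nat \<Rightarrow> triple \<Rightarrow> int" where
  "Prank m n x = (case x of (i,j,k) \<Rightarrow> int m + int n - 2 - i - j + 2 * k)"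

end

theory Submission
  imports Defs
begin

lemma gen_rank: "gen m n x y \<Longrightarrow> Prank m n y = Prank m n x + 1"
  unfolding gen_def Prank_def by (auto split: prod.splits)

lemma gen_mem: "gen m n x y \<Longrightarrow> x \<in> Pelems m n \<and> y \<in> Pelems m n"
  unfolding gen_def by auto

lemma rt_rank: "(gen m n)\<^sup>*\<^sup>* x y \<Longrightarrow> x = y \<or> Prank m n x < Prank m n y"
proof (induction rule: rtranclp_induct)
  case base then show ?case by simp
next
  case (step y z) then show ?case using gen_rank[of m n y z] by auto
qed

theorem proposition3p17:
  fixes m n :: nat
  assumes "0 < m" and "0 < n"
  shows "(\<forall>x y. Ple m n x y \<and> Ple m n y x \<longrightarrow> x = y)
       \<and> (\<forall>x y. Pcovers m n x y \<longrightarrow> Prank m n y = Prank m n x + 1)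
       \<and> (\<forall>x. Pminimal m n x \<longleftrightarrow> x = (int m - 1, int n - 1, 0))
       \<and> Prank m n (int m - 1, int n - 1, 0) = 0
       \<and> (\<forall>x. Pmaximal m n x \<longrightarrow> (\<exists>i. x = (i, i, i)) \<and> Prank m n x = int m + int n - 2)"
proof (intro conjI allI impI iffI)
  fix x y assume "Ple m n x y \<and> Ple m n y x"
  then show "x = y" using rt_rank[of m n x y] rt_rank[of m n y x] unfolding Ple_def by auto
next
  fix x y assume c: "Pcovers m n x y"
  then have xy: "(gen m n)\<^sup>*\<^sup>* x y" "x \<noteq> y" "x \<in> Pelems m n" "y \<in> Pelems m n"
    unfolding Pcovers_def Pless_def Ple_def by auto
  from xy(1) show "Prank m n y = Prank m n x + 1"
  proof (cases rule: converse_rtranclpE)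
    case base then show ?thesis using xy by simp
  next
    case (step z)
    show ?thesis
    proof (cases "z = y")
      case True then show ?thesis using step gen_rank by blast
    next
      case False
      have "Pless m n x z" using step gen_mem[of m n x z] gen_rank[of m n x z]
        unfolding Pless_def Ple_def by auto
      moreover have "Pless m n z y" using step False gen_mem[of m n x z] xy
        unfolding Pless_def Ple_def by auto
      ultimately show ?thesis using c unfolding Pcovers_def by blast
    qed
  qed
next
  fix x assume mn: "Pminimal m n x"
  show "x = (int m - 1, int n - 1, 0)"
  proof (rule ccontr)
    assume ne: "x \<noteq> (int m - 1, int n - 1, 0)"
    obtain i j k where x: "x = (i,j,k)" by (cases x) auto
    have xm: "x \<in> Pelems m n" using mn unfolding Pminimal_def by auto
    have "\<exists>y. gen m n y x"
    proof (cases "i < int m - 1")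
      case True then show ?thesis using xm unfolding x gen_def Pelems_def
        by (intro exI[of _ "(i+1,j,k)"]) auto
    next
      case F1: False
      show ?thesis
      proof (cases "j < int n - 1")
        case True then show ?thesis using xm unfolding x gen_def Pelems_def
          by (intro exI[of _ "(i,j+1,k)"]) auto
      next
        case False
        then show ?thesis using F1 ne xm unfolding x gen_def Pelems_def
          by (intro exI[of _ "(i-1,j,k-1)"]) auto
      qed
    qed
    then obtain y where g: "gen m n y x" by blast
    have "Pless m n y x" using g gen_mem[OF g] gen_rank[OF g]
      unfolding Pless_def Ple_def by auto
    then show False using mn unfolding Pminimal_def by blast
  qed
next
  fix x assume x: "x = (int m - 1, int n - 1, (0::int))"
  have x0: "x \<in> Pelems m n" using x assms unfolding Pelems_def by auto
  have "\<not> gen m n z x" for z using x unfolding gen_def Pelems_def by auto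
  then have "\<not> Pless m n y x" for y
    unfolding Pless_def Ple_def by (auto elim: rtranclp.cases)
  then show "Pminimal m n x" using x0 unfolding Pminimal_def by blast
next
  show "Prank m n (int m - 1, int n - 1, 0) = 0" unfolding Prank_def by simp
next
  fix x assume mx: "Pmaximal m n x"
  obtain i j k where x: "x = (i,j,k)" by (cases x) auto
  have xm: "x \<in> Pelems m n" using mx unfolding Pmaximal_def by auto
  have ng: "\<not> gen m n x y" for y
  proof
    assume g: "gen m n x y"
    have "Pless m n x y" using g gen_mem[OF g] gen_rank[OF g]
      unfolding Pless_def Ple_def by auto
    then show False using mx unfolding Pmaximal_def by blast
  qed
  have "i = k"
  proof (rule ccontr)
    assume "i \<noteq> k"
    then have "gen m n x (i-1,j,k)" using xm unfolding x gen_def Pelems_def by auto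
    then show False using ng by blast
  qed
  moreover have "j = k"
  proof (rule ccontr)
    assume "j \<noteq> k"
    then have "gen m n x (i,j-1,k)" using xm unfolding x gen_def Pelems_def by auto
    then show False using ng by blast
  qed
  ultimately show "\<exists>i. x = (i, i, i)" unfolding x by auto
next
  fix x assume mx: "Pmaximal m n x"
  obtain i j k where x: "x = (i,j,k)" by (cases x) auto
  have xm: "x \<in> Pelems m n" using mx unfolding Pmaximal_def by auto
  have ng: "\<not> gen m n x y" for y
  proof
    assume g: "gen m n x y"
    have "Pless m n x y" using g gen_mem[OF g] gen_rank[OF g]
      unfolding Pless_def Ple_def by auto
    then show False using mx unfolding Pmaximal_def by blast
  qed
  have "i = k"
  proof (rule ccontr)
    assume "i \<noteq> k"
    then have "gen m n x (i-1,j,k)" using xm unfolding x gen_def Pelems_def by auto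
    then show False using ng by blast
  qed
  moreover have "j = k"
  proof (rule ccontr)
    assume "j \<noteq> k"
    then have "gen m n x (i,j-1,k)" using xm unfolding x gen_def Pelems_def by auto
    then show False using ng by blast
  qed
  ultimately show "Prank m n x = int m + int n - 2" unfolding x Prank_def by auto
qed

end
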